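(* Let $X$ be a continuous L-space with spatial part $Y$, and let $U\in{\sf ClopUp}(X)$. The following are equivalent: (1) $\ker U=\mathrm{core}\,U$; (2) $\mathrm{core}\,U$ is dense in $U$; (3) for each $y\in U\cap Y$ there is $V\in{\sf ClopSUp}(X)$ with $y\in V\subseteq U$; (4) for each Scott upset $F\subseteq\ker U$ there is $V\in{\sf ClopSUp}(X)$ with $F\subseteq V\subseteq U$.
   Context: A Priestley space is a Stone space $X$ with a partial order such that clopen upsets separate points. An L-space is a Priestley space in which the downset of each clopen set is clopen and the closure of each open upset is open. ${\sf ClopUp}(X)$ is the set of clopen upsets of $X$; $\mathrm{cl}$ denotes closure. The spatial part of $X$ is $Y=\{y\in X\mid{\downarrow}y\text{ is clopen}\}$. A Scott upset is a closed upset $F$ with $\min F\subseteq Y$; ${\sf ClopSUp}(X)$ is the set of clopen Scott upsets. For $U,V\in{\sf ClopUp}(X)$, write $V\ll U$ if for every open upset $W$ of $X$, $U\subseteq\mathrm{cl}\,W$ implies $V\subseteq W$. Define $\ker U=\bigcup\{V\in{\sf ClopUp}(X)\mid V\ll U\}$ and $\mathrm{core}\,U=\bigcup\{V\in{\sf ClopSUp}(X)\mid V\subseteq U\}$. $X$ is a continuous L-space if $\ker U$ is dense in $U$ for all $U\in{\sf ClopUp}(X)$. *)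

theory Defs
  imports "HOL-Analysis.Analysis"
begin

text \<open>An ordered topological space is given by a topology T on 'a (carrier topspace T)
  together with a relation le, intended as a partial order on topspace T.\<close>

definition clopenin :: "'a topology \<Rightarrow> 'a set \<Rightarrow> bool" where
  "clopenin T U \<longleftrightarrow> closedin T U \<and> openin T U"

definition upset :: "'a topology \<Rightarrow> ('a \<Rightarrow> 'a \<Rightarrow> bool) \<Rightarrow> 'a set \<Rightarrow> bool" where
  "upset T le U \<longleftrightarrow> U \<subseteq> topspace T \<and> (\<forall>x\<in>U. \<forall>y\<in>topspace T. le x y \<longrightarrow> y \<in> U)"

definition downclosure :: "'a topology \<Rightarrow> ('a \<Rightarrow> 'a \<Rightarrow> bool) \<Rightarrow> 'a set \<Rightarrow> 'a set" where
  "downclosure T le A = {y \<in> topspace T. \<exists>x\<in>A. le y x}"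

definition partial_order_on_space :: "'a topology \<Rightarrow> ('a \<Rightarrow> 'a \<Rightarrow> bool) \<Rightarrow> bool" where
  "partial_order_on_space T le \<longleftrightarrow>
     (\<forall>x\<in>topspace T. le x x) \<and>
     (\<forall>x\<in>topspace T. \<forall>y\<in>topspace T. le x y \<and> le y x \<longrightarrow> x = y) \<and>
     (\<forall>x\<in>topspace T. \<forall>y\<in>topspace T. \<forall>z\<in>topspace T. le x y \<and> le y z \<longrightarrow> le x z)"

definition stone_space :: "'a topology \<Rightarrow> bool" where
  "stone_space T \<longleftrightarrow> compact_space T \<and> Hausdorff_space T \<and>
     (\<forall>W x. openin T W \<and> x \<in> W \<longrightarrow> (\<exists>C. clopenin T C \<and> x \<in> C \<and> C \<subseteq> W))"

definition ClopUp :: "'a topology \<Rightarrow> ('a \<Rightarrow> 'a \<Rightarrow> bool) \<Rightarrow> 'a set set" where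
  "ClopUp T le = {U. clopenin T U \<and> upset T le U}"

definition priestley_space :: "'a topology \<Rightarrow> ('a \<Rightarrow> 'a \<Rightarrow> bool) \<Rightarrow> bool" where
  "priestley_space T le \<longleftrightarrow> stone_space T \<and> partial_order_on_space T le \<and>
     (\<forall>x\<in>topspace T. \<forall>y\<in>topspace T. \<not> le x y \<longrightarrow> (\<exists>U\<in>ClopUp T le. x \<in> U \<and> y \<notin> U))"

definition L_space :: "'a topology \<Rightarrow> ('a \<Rightarrow> 'a \<Rightarrow> bool) \<Rightarrow> bool" where
  "L_space T le \<longleftrightarrow> priestley_space T le \<and>
     (\<forall>U. clopenin T U \<longrightarrow> clopenin T (downclosure T le U)) \<and>
     (\<forall>U. openin T U \<and> upset T le U \<longrightarrow> openin T (T closure_of U))"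

definition spatial_part :: "'a topology \<Rightarrow> ('a \<Rightarrow> 'a \<Rightarrow> bool) \<Rightarrow> 'a set" where
  "spatial_part T le = {y \<in> topspace T. clopenin T (downclosure T le {y})}"

definition minimals :: "('a \<Rightarrow> 'a \<Rightarrow> bool) \<Rightarrow> 'a set \<Rightarrow> 'a set" where
  "minimals le F = {x \<in> F. \<forall>z\<in>F. le z x \<longrightarrow> z = x}"

definition scott_upset :: "'a topology \<Rightarrow> ('a \<Rightarrow> 'a \<Rightarrow> bool) \<Rightarrow> 'a set \<Rightarrow> bool" where
  "scott_upset T le F \<longleftrightarrow> closedin T F \<and> upset T le F \<and> minimals le F \<subseteq> spatial_part T le"

definition ClopSUp :: "'a topology \<Rightarrow> ('a \<Rightarrow> 'a \<Rightarrow> bool) \<Rightarrow> 'a set set" where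
  "ClopSUp T le = {U \<in> ClopUp T le. scott_upset T le U}"

definition way_below :: "'a topology \<Rightarrow> ('a \<Rightarrow> 'a \<Rightarrow> bool) \<Rightarrow> 'a set \<Rightarrow> 'a set \<Rightarrow> bool" where
  "way_below T le V U \<longleftrightarrow>
     (\<forall>W. openin T W \<and> upset T le W \<and> U \<subseteq> T closure_of W \<longrightarrow> V \<subseteq> W)"

definition ker :: "'a topology \<Rightarrow> ('a \<Rightarrow> 'a \<Rightarrow> bool) \<Rightarrow> 'a set \<Rightarrow> 'a set" where
  "ker T le U = \<Union>{V \<in> ClopUp T le. way_below T le V U}"

definition core :: "'a topology \<Rightarrow> ('a \<Rightarrow> 'a \<Rightarrow> bool) \<Rightarrow> 'a set \<Rightarrow> 'a set" where
  "core T le U = \<Union>{V \<in> ClopSUp T le. V \<subseteq> U}"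

text \<open>A set A is dense in U when U is contained in the closure of A.\<close>
definition continuous_L_space :: "'a topology \<Rightarrow> ('a \<Rightarrow> 'a \<Rightarrow> bool) \<Rightarrow> bool" where
  "continuous_L_space T le \<longleftrightarrow> L_space T le \<and>
     (\<forall>U\<in>ClopUp T le. U \<subseteq> T closure_of (ker T le U))"

end

theory Submission
  imports Defs
begin

lemma po_refl: "priestley_space T le \<Longrightarrow> x \<in> topspace T \<Longrightarrow> le x x"
  by (auto simp: priestley_space_def partial_order_on_space_def)

lemma po_antisym: "priestley_space T le \<Longrightarrow> x \<in> topspace T \<Longrightarrow> y \<in> topspace T \<Longrightarrow> le x y \<Longrightarrow> le y x \<Longrightarrow> x = y"
  unfolding priestley_space_def partial_order_on_space_def by blast

lemma po_trans: "priestley_space T le \<Longrightarrow> x \<in> topspace T \<Longrightarrow> y \<in> topspace T \<Longrightarrow> z \<in> topspace T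
   \<Longrightarrow> le x y \<Longrightarrow> le y z \<Longrightarrow> le x z"
  unfolding priestley_space_def partial_order_on_space_def by blast

lemma pr_sep: "priestley_space T le \<Longrightarrow> x \<in> topspace T \<Longrightarrow> y \<in> topspace T \<Longrightarrow> \<not> le x y
   \<Longrightarrow> \<exists>U. clopenin T U \<and> upset T le U \<and> x \<in> U \<and> y \<notin> U"
  by (auto simp: priestley_space_def ClopUp_def)

lemma pr_compact: "priestley_space T le \<Longrightarrow> compact_space T"
  by (simp add: priestley_space_def stone_space_def)

lemma pr_base: "priestley_space T le \<Longrightarrow> openin T W \<Longrightarrow> x \<in> W \<Longrightarrow> \<exists>C. clopenin T C \<and> x \<in> C \<and> C \<subseteq> W"
  by (simp add: priestley_space_def stone_space_def)

lemma L_pr: "L_space T le \<Longrightarrow> priestley_space T le"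
  unfolding L_space_def by blast

lemma cL_L: "continuous_L_space T le \<Longrightarrow> L_space T le"
  unfolding continuous_L_space_def by blast

lemma L_down: "L_space T le \<Longrightarrow> clopenin T U \<Longrightarrow> clopenin T (downclosure T le U)"
  unfolding L_space_def by blast

lemma L_cl: "L_space T le \<Longrightarrow> openin T U \<Longrightarrow> upset T le U \<Longrightarrow> openin T (T closure_of U)"
  unfolding L_space_def by blast

lemma down_closed:
  assumes "priestley_space T le" "z \<in> topspace T"
  shows "closedin T {u \<in> topspace T. le u z}"
proof -
  have "openin T (topspace T - {u \<in> topspace T. le u z})"
  proof (subst openin_subopen, intro ballI)
    fix u assume u: "u \<in> topspace T - {u \<in> topspace T. le u z}"
    then obtain U where U: "clopenin T U" "upset T le U" "u \<in> U" "z \<notin> U"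
      using pr_sep[OF assms(1), of u z] assms(2) by auto
    have "U \<subseteq> topspace T - {u \<in> topspace T. le u z}"
      using U assms(2) by (auto simp: upset_def)
    then show "\<exists>V. openin T V \<and> u \<in> V \<and> V \<subseteq> topspace T - {u \<in> topspace T. le u z}"
      using U by (auto simp: clopenin_def)
  qed
  then show ?thesis by (simp add: closedin_def)
qed

lemma up_closed:
  assumes "priestley_space T le" "z \<in> topspace T"
  shows "closedin T {u \<in> topspace T. le z u}"
proof -
  have "openin T (topspace T - {u \<in> topspace T. le z u})"
  proof (subst openin_subopen, intro ballI)
    fix u assume u: "u \<in> topspace T - {u \<in> topspace T. le z u}"
    then obtain U where U: "clopenin T U" "upset T le U" "z \<in> U" "u \<notin> U"
      using pr_sep[OF assms(1), of z u] assms(2) by auto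
    have "topspace T - U \<subseteq> topspace T - {u \<in> topspace T. le z u}"
      using U assms(2) by (auto simp: upset_def)
    moreover have "openin T (topspace T - U)" using U by (auto simp: clopenin_def)
    ultimately show "\<exists>V. openin T V \<and> u \<in> V \<and> V \<subseteq> topspace T - {u \<in> topspace T. le z u}"
      using U u by blast
  qed
  then show ?thesis by (simp add: closedin_def)
qed

lemma min_exists:
  assumes P: "priestley_space T le" and cF: "closedin T F" and xF: "x \<in> F"
  shows "\<exists>y\<in>minimals le F. le y x"
proof -
  let ?X = "topspace T"
  have FX: "F \<subseteq> ?X" using cF closedin_subset by blast
  define G where "G z = {u \<in> ?X. \<not> le u z}" for z
  define A where "A = G ` {z \<in> F. le z x}"
  have x0: "le x x" using po_refl[OF P] xF FX by auto
  have Gsub: "le z1 z2" if "G z2 \<subseteq> G z1" "z1 \<in> ?X" for z1 z2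
  proof -
    have "z1 \<notin> G z1" using po_refl[OF P] that(2) by (auto simp: G_def)
    then have "z1 \<notin> G z2" using that by auto
    then show ?thesis using that(2) by (auto simp: G_def)
  qed
  have chainub: "\<exists>S\<in>A. \<forall>R\<in>C. R \<subseteq> S" if C: "C \<in> chains A" for C
  proof (cases "C = {}")
    case True
    then show ?thesis using xF x0 by (auto simp: A_def)
  next
    case False
    have CA: "C \<subseteq> A" and Cch: "\<forall>R\<in>C. \<forall>S\<in>C. R \<subseteq> S \<or> S \<subseteq> R"
      using C by (auto simp: chains_def chain_subset_def)
    define Z where "Z = {z \<in> F. le z x \<and> G z \<in> C}"
    define K where "K z = F \<inter> {u \<in> ?X. le u z}" for z
    have CZ: "C = G ` Z" using CA by (auto simp: Z_def A_def)
    have Zne: "Z \<noteq> {}" using CZ False by auto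
    have "\<Inter>(K ` Z) \<noteq> {}"
    proof -
      have cl: "\<forall>S\<in>K ` Z. closedin T S"
        using FX cF down_closed[OF P] by (auto simp: K_def Z_def intro!: closedin_Int)
      have fip: "\<Inter>\<F> \<noteq> {}" if fin: "finite \<F>" and sub: "\<F> \<subseteq> K ` Z" for \<F>
      proof (cases "\<F> = {}")
        case True then show ?thesis by simp
      next
        case False
        obtain Z0 where Z0: "Z0 \<subseteq> Z" "finite Z0" "\<F> = K ` Z0"
          using finite_subset_image[OF fin sub] by blast
        have Z0ne: "Z0 \<noteq> {}" using Z0 False by auto
        have GZ0: "G ` Z0 \<subseteq> C" using Z0(1) CZ by auto
        have "subset.chain A (G ` Z0)"
          unfolding subset.chain_def using GZ0 CA Cch by blast
        then have "\<Union>(G ` Z0) \<in> G ` Z0"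
          using Union_in_chain[of "G ` Z0" A] Z0 Z0ne by auto
        then obtain z0 where z0: "z0 \<in> Z0" "\<Union>(G ` Z0) = G z0" by auto
        have z0X: "z0 \<in> ?X" "z0 \<in> F" using z0 Z0 FX by (auto simp: Z_def)
        have "z0 \<in> K z" if "z \<in> Z0" for z
        proof -
          have "G z \<subseteq> G z0" using z0 that by blast
          then have "le z0 z" using Gsub z0X by blast
          then show ?thesis using z0X by (auto simp: K_def)
        qed
        then show ?thesis using Z0 by auto
      qed
      have "\<forall>\<U>. (\<forall>C\<in>\<U>. closedin T C) \<and> (\<forall>\<F>. finite \<F> \<and> \<F> \<subseteq> \<U> \<longrightarrow> \<Inter>\<F> \<noteq> {}) \<longrightarrow> \<Inter>\<U> \<noteq> {}"
        using pr_compact[OF P] unfolding compact_space_fip .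
      then show ?thesis using cl fip by presburger
    qed
    then obtain w where w: "w \<in> \<Inter>(K ` Z)" by auto
    obtain z1 where z1: "z1 \<in> Z" using Zne by auto
    have "w \<in> K z1" using w z1 by blast
    then have wF: "w \<in> F" "w \<in> ?X" by (auto simp: K_def)
    have wle: "le w z" if "z \<in> Z" for z
    proof -
      have "w \<in> K z" using w that by blast
      then show ?thesis by (auto simp: K_def)
    qed
    have wx: "le w x"
      using po_trans[OF P, of w z1 x] wF wle[OF z1] z1 FX xF by (auto simp: Z_def)
    have "G w \<in> A" using wF wx by (auto simp: A_def)
    moreover have "R \<subseteq> G w" if RC: "R \<in> C" for R
    proof -
      obtain z where z: "z \<in> Z" "R = G z" using CZ RC by auto
      have zX: "z \<in> ?X" using z FX by (auto simp: Z_def)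
      show ?thesis
      proof
        fix u assume "u \<in> R"
        then have u: "u \<in> ?X" "\<not> le u z" using z by (auto simp: G_def)
        have "\<not> le u w" using po_trans[OF P, of u w z] u wF zX wle[OF z(1)] by auto
        then show "u \<in> G w" using u by (auto simp: G_def)
      qed
    qed
    ultimately show ?thesis by blast
  qed
  have "\<forall>C\<in>chains A. \<exists>S\<in>A. \<forall>R\<in>C. R \<subseteq> S" using chainub by blast
  then obtain M where M: "M \<in> A" "\<forall>S\<in>A. M \<subseteq> S \<longrightarrow> S = M"
    using Zorn_Lemma2[of A] by blast
  then obtain m where m: "m \<in> F" "le m x" "M = G m" by (auto simp: A_def)
  have mX: "m \<in> ?X" using m FX by auto
  have "m \<in> minimals le F"
    unfolding minimals_def
  proof (intro CollectI conjI ballI impI)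
    show "m \<in> F" by fact
    fix z assume z: "z \<in> F" "le z m"
    have zX: "z \<in> ?X" using z FX by auto
    have zx: "le z x" using po_trans[OF P, of z m x] z zX mX m FX xF by auto
    have "G m \<subseteq> G z"
    proof
      fix u assume "u \<in> G m"
      then have u: "u \<in> ?X" "\<not> le u m" by (auto simp: G_def)
      have "\<not> le u z" using po_trans[OF P, of u z m] u z zX mX by auto
      then show "u \<in> G z" using u by (auto simp: G_def)
    qed
    moreover have "G z \<in> A" using z zx by (simp add: A_def)
    ultimately have "G z = G m" using M(2) m(3) by blast
    then have "le m z" using Gsub mX by auto
    then show "z = m" using po_antisym[OF P] z zX mX by auto
  qed
  then show ?thesis using m by blast
qed



lemma clopenin_compl: "clopenin T K \<Longrightarrow> clopenin T (topspace T - K)"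
  unfolding clopenin_def by (simp add: closedin_diff openin_diff)

lemma closure_upset:
  assumes L: "L_space T le" and W: "upset T le W"
  shows "upset T le (T closure_of W)"
  unfolding upset_def
proof (intro conjI ballI impI)
  have P: "priestley_space T le" using L by (rule L_pr)
  have WX: "W \<subseteq> topspace T" using W by (simp add: upset_def)
  show "T closure_of W \<subseteq> topspace T" by (rule closure_of_subset_topspace)
  fix a b assume a: "a \<in> T closure_of W" and b: "b \<in> topspace T" and ab: "le a b"
  show "b \<in> T closure_of W"
  proof (rule ccontr)
    assume nb: "b \<notin> T closure_of W"
    have "openin T (topspace T - T closure_of W)" by (simp add: openin_diff)
    then obtain C where C: "clopenin T C" "b \<in> C" "C \<subseteq> topspace T - T closure_of W"
      using pr_base[OF P] nb b by blast
    have D: "clopenin T (downclosure T le C)" using L_down[OF L C(1)] .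
    have aX: "a \<in> topspace T" using a by (simp add: in_closure_of)
    have aD: "a \<in> downclosure T le C" using aX C(2) ab by (auto simp: downclosure_def)
    obtain y where y: "y \<in> W" "y \<in> downclosure T le C"
      using a aD D unfolding in_closure_of clopenin_def by blast
    then obtain c where c: "c \<in> C" "le y c" by (auto simp: downclosure_def)
    have "c \<in> topspace T" using c C(3) by blast
    then have "c \<in> W" using W y c unfolding upset_def by blast
    then have "c \<in> T closure_of W" using closure_of_subset[OF WX] by blast
    then show False using c C(3) by blast
  qed
qed

lemma spatial_in_open_upset:
  assumes P: "priestley_space T le" and y: "y \<in> spatial_part T le"
    and W: "openin T W" "upset T le W" and yc: "y \<in> T closure_of W"
  shows "y \<in> W"
proof (rule ccontr)
  assume nW: "y \<notin> W"
  let ?D = "downclosure T le {y}"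
  have yX: "y \<in> topspace T" and D: "clopenin T ?D" using y by (auto simp: spatial_part_def)
  have "W \<subseteq> topspace T - ?D"
  proof
    fix w assume w: "w \<in> W"
    have wX: "w \<in> topspace T" using W(2) w by (auto simp: upset_def)
    have "\<not> le w y" using W(2) w nW yX unfolding upset_def by blast
    then show "w \<in> topspace T - ?D" using wX by (auto simp: downclosure_def)
  qed
  moreover have "closedin T (topspace T - ?D)" using D by (simp add: clopenin_def closedin_diff)
  ultimately have "T closure_of W \<subseteq> topspace T - ?D" by (rule closure_of_minimal)
  moreover have "y \<in> ?D" using yX po_refl[OF P yX] by (auto simp: downclosure_def)
  ultimately show False using yc by blast
qed

lemma upset_Union: "(\<And>S. S \<in> \<S> \<Longrightarrow> upset T le S) \<Longrightarrow> upset T le (\<Union>\<S>)"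
  unfolding upset_def by blast

lemma ker_open: "openin T (ker T le U)"
  unfolding ker_def ClopUp_def clopenin_def by (rule openin_Union) blast

lemma ker_upset: "upset T le (ker T le U)"
  unfolding ker_def ClopUp_def by (rule upset_Union) blast

lemma way_below_sub:
  assumes U: "U \<in> ClopUp T le" and wb: "way_below T le V U"
  shows "V \<subseteq> U"
proof -
  have o: "openin T U" and u: "upset T le U" using U by (auto simp: ClopUp_def clopenin_def)
  have "U \<subseteq> topspace T" using u by (simp add: upset_def)
  then have "U \<subseteq> T closure_of U" by (rule closure_of_subset)
  then show ?thesis using wb o u unfolding way_below_def by blast
qed

lemma ker_sub: "U \<in> ClopUp T le \<Longrightarrow> ker T le U \<subseteq> U"
  unfolding ker_def using way_below_sub by blast

lemma core_open: "openin T (core T le U)"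
  unfolding core_def ClopSUp_def ClopUp_def clopenin_def by (rule openin_Union) blast

lemma core_upset: "upset T le (core T le U)"
  unfolding core_def ClopSUp_def ClopUp_def by (rule upset_Union) blast

lemma core_sub: "core T le U \<subseteq> U"
  unfolding core_def by blast

lemma Union_ClopUp: "finite \<F> \<Longrightarrow> \<F> \<subseteq> ClopUp T le \<Longrightarrow> \<Union>\<F> \<in> ClopUp T le"
  unfolding ClopUp_def clopenin_def
  by (auto intro!: closedin_Union openin_Union upset_Union)

lemma Union_ClopSUp:
  assumes "finite \<F>" "\<F> \<subseteq> ClopSUp T le"
  shows "\<Union>\<F> \<in> ClopSUp T le"
proof -
  have cu: "\<Union>\<F> \<in> ClopUp T le" using assms Union_ClopUp[of \<F> T le] by (auto simp: ClopSUp_def)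
  have "minimals le (\<Union>\<F>) \<subseteq> spatial_part T le"
  proof
    fix m assume m: "m \<in> minimals le (\<Union>\<F>)"
    then obtain V where V: "V \<in> \<F>" "m \<in> V" by (auto simp: minimals_def)
    have "m \<in> minimals le V" using m V unfolding minimals_def by blast
    then show "m \<in> spatial_part T le" using V assms(2) by (auto simp: ClopSUp_def scott_upset_def)
  qed
  then show ?thesis using cu by (auto simp: ClopSUp_def scott_upset_def ClopUp_def clopenin_def)
qed

lemma core_sub_ker:
  assumes L: "L_space T le" and U: "U \<in> ClopUp T le"
  shows "core T le U \<subseteq> ker T le U"
proof
  have P: "priestley_space T le" using L by (rule L_pr)
  fix x assume "x \<in> core T le U"
  then obtain V where V: "V \<in> ClopSUp T le" "V \<subseteq> U" "x \<in> V" by (auto simp: core_def)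
  have VC: "V \<in> ClopUp T le" and VS: "scott_upset T le V" using V by (auto simp: ClopSUp_def)
  have "way_below T le V U"
    unfolding way_below_def
  proof (intro allI impI subsetI)
    fix W v assume W: "openin T W \<and> upset T le W \<and> U \<subseteq> T closure_of W" and v: "v \<in> V"
    have cV: "closedin T V" using VS by (simp add: scott_upset_def)
    obtain m where m: "m \<in> minimals le V" "le m v" using min_exists[OF P cV v] by blast
    have mY: "m \<in> spatial_part T le" using m VS by (auto simp: scott_upset_def)
    have mV: "m \<in> V" using m by (simp add: minimals_def)
    have "m \<in> W" using spatial_in_open_upset[OF P mY] W mV V(2) by blast
    moreover have "v \<in> topspace T" using v VC by (auto simp: ClopUp_def upset_def)
    ultimately show "v \<in> W" using W m(2) unfolding upset_def by blast
  qed
  then show "x \<in> ker T le U" using VC V(3) by (auto simp: ker_def)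
qed



lemma interpolate:
  assumes cL: "continuous_L_space T le" and A: "A \<in> ClopUp T le" and V: "V \<in> ClopUp T le"
    and VA: "way_below T le V A"
  shows "\<exists>D\<in>ClopUp T le. way_below T le V D \<and> way_below T le D A"
proof -
  have L: "L_space T le" using cL by (rule cL_L)
  have P: "priestley_space T le" using L by (rule L_pr)
  have dense: "\<And>U. U \<in> ClopUp T le \<Longrightarrow> U \<subseteq> T closure_of (ker T le U)"
    using cL unfolding continuous_L_space_def by blast
  define \<D> where "\<D> = {D \<in> ClopUp T le. way_below T le D A}"
  define W' where "W' = \<Union>{ker T le D | D. D \<in> \<D>}"
  have oW: "openin T W'" unfolding W'_def using ker_open by blast
  have uW: "upset T le W'" unfolding W'_def by (rule upset_Union) (use ker_upset in blast)
  have "ker T le A \<subseteq> T closure_of W'"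
  proof
    fix x assume "x \<in> ker T le A"
    then obtain D where D: "D \<in> \<D>" "x \<in> D" by (auto simp: ker_def \<D>_def)
    have "D \<subseteq> T closure_of (ker T le D)" using dense D by (auto simp: \<D>_def)
    moreover have "ker T le D \<subseteq> W'" using D unfolding W'_def by blast
    ultimately show "x \<in> T closure_of W'" using D closure_of_mono by blast
  qed
  then have "T closure_of (ker T le A) \<subseteq> T closure_of W'"
    by (simp add: closure_of_minimal)
  then have "A \<subseteq> T closure_of W'" using dense[OF A] by blast
  then have VW: "V \<subseteq> W'" using VA oW uW unfolding way_below_def by blast
  define \<C> where "\<C> = {E \<in> ClopUp T le. \<exists>D\<in>\<D>. way_below T le E D}"
  have "V \<subseteq> \<Union>\<C>"
  proof
    fix v assume "v \<in> V"
    then obtain D where D: "D \<in> \<D>" "v \<in> ker T le D" using VW unfolding W'_def by blast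
    then obtain E where "E \<in> ClopUp T le" "way_below T le E D" "v \<in> E" by (auto simp: ker_def)
    then show "v \<in> \<Union>\<C>" using D unfolding \<C>_def by blast
  qed
  moreover have "compactin T V"
    using V pr_compact[OF P] closedin_compact_space by (auto simp: ClopUp_def clopenin_def)
  moreover have "\<forall>E\<in>\<C>. openin T E" by (auto simp: \<C>_def ClopUp_def clopenin_def)
  ultimately obtain \<F> where F: "finite \<F>" "\<F> \<subseteq> \<C>" "V \<subseteq> \<Union>\<F>"
    unfolding compactin_def by meson
  have "\<forall>E\<in>\<F>. \<exists>D. D \<in> \<D> \<and> way_below T le E D" using F(2) by (auto simp: \<C>_def)
  then obtain g where g: "\<forall>E\<in>\<F>. g E \<in> \<D> \<and> way_below T le E (g E)" by metis
  define D0 where "D0 = \<Union>(g ` \<F>)"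
  have D0C: "D0 \<in> ClopUp T le" unfolding D0_def
    using g F(1) by (intro Union_ClopUp) (auto simp: \<D>_def)
  have "way_below T le D0 A"
    unfolding way_below_def
  proof (intro allI impI)
    fix W assume W: "openin T W \<and> upset T le W \<and> A \<subseteq> T closure_of W"
    have "g E \<subseteq> W" if "E \<in> \<F>" for E
      using g that W by (auto simp: \<D>_def way_below_def)
    then show "D0 \<subseteq> W" unfolding D0_def by blast
  qed
  moreover have "way_below T le V D0"
    unfolding way_below_def
  proof (intro allI impI)
    fix W assume W: "openin T W \<and> upset T le W \<and> D0 \<subseteq> T closure_of W"
    have "E \<subseteq> W" if "E \<in> \<F>" for E
    proof -
      have "g E \<subseteq> T closure_of W" using W that unfolding D0_def by blast
      then show ?thesis using g that W unfolding way_below_def by blast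
    qed
    then show "V \<subseteq> W" using F(3) by blast
  qed
  ultimately show ?thesis using D0C by blast
qed



lemma spatial:
  assumes cL: "continuous_L_space T le" and A: "A \<in> ClopUp T le" and C: "C \<in> ClopUp T le"
    and x0: "x0 \<in> A" "x0 \<notin> C"
  shows "\<exists>y\<in>spatial_part T le. y \<in> A \<and> y \<notin> C"
proof -
  have L: "L_space T le" using cL by (rule cL_L)
  have P: "priestley_space T le" using L by (rule L_pr)
  let ?X = "topspace T"
  have dense: "\<And>U. U \<in> ClopUp T le \<Longrightarrow> U \<subseteq> T closure_of (ker T le U)"
    using cL unfolding continuous_L_space_def by blast
  have x0c: "x0 \<in> T closure_of (ker T le A)" using dense[OF A] x0 by blast
  have oC: "openin T (?X - C)" using C by (auto simp: ClopUp_def clopenin_def)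
  have x0X: "x0 \<in> ?X - C" using x0c x0 by (simp add: in_closure_of)
  obtain v where v: "v \<in> ker T le A" "v \<in> ?X - C"
    using x0c oC x0X unfolding in_closure_of by blast
  then obtain V where V: "V \<in> ClopUp T le" "way_below T le V A" "v \<in> V" by (auto simp: ker_def)
  have ex: "\<forall>D. \<exists>D'. D \<in> ClopUp T le \<and> way_below T le V D \<longrightarrow>
           D' \<in> ClopUp T le \<and> way_below T le V D' \<and> way_below T le D' D"
    using interpolate[OF cL _ V(1)] by blast
  obtain f where f': "\<forall>D. D \<in> ClopUp T le \<and> way_below T le V D \<longrightarrow>
           f D \<in> ClopUp T le \<and> way_below T le V (f D) \<and> way_below T le (f D) D"
    using choice[OF ex] by blast
  have f: "f D \<in> ClopUp T le \<and> way_below T le V (f D) \<and> way_below T le (f D) D"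
    if "D \<in> ClopUp T le" "way_below T le V D" for D
    using f' that by blast
  define B where "B n = (f ^^ n) A" for n
  have Binv: "B n \<in> ClopUp T le \<and> way_below T le V (B n)" for n
  proof (induction n)
    case 0 then show ?case using A V by (simp add: B_def)
  next
    case (Suc n) then show ?case using f[of "B n"] by (simp add: B_def)
  qed
  have Bstep: "way_below T le (B (Suc n)) (B n)" for n
    using f[of "B n"] Binv[of n] by (simp add: B_def)
  have Bsuc: "B (Suc n) \<subseteq> B n" for n using way_below_sub Bstep Binv by blast
  have Bdec: "decseq B" by (rule decseq_SucI) (use Bsuc in blast)
  have BX: "B n \<subseteq> ?X" for n using Binv[of n] by (auto simp: ClopUp_def upset_def)
  define F where "F = \<Inter>(range B)"
  have cF: "closedin T F" unfolding F_def
    using Binv by (intro closedin_Inter) (auto simp: ClopUp_def clopenin_def)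
  have "B 0 = A" by (simp add: B_def)
  then have FA: "F \<subseteq> A" unfolding F_def by blast
  have VF: "V \<subseteq> F" unfolding F_def using Binv way_below_sub by blast
  have keyP: "F \<subseteq> W" if W: "openin T W" "upset T le W" "F \<subseteq> T closure_of W" for W
  proof -
    have ocW: "openin T (T closure_of W)" using L_cl[OF L W(1,2)] .
    let ?\<U> = "insert (T closure_of W) (range (\<lambda>n. ?X - B n))"
    have o1: "\<forall>U\<in>?\<U>. openin T U"
      using ocW Binv by (auto simp: ClopUp_def clopenin_def intro!: openin_diff)
    have o2: "?X \<subseteq> \<Union>?\<U>"
    proof
      fix u assume u: "u \<in> ?X"
      show "u \<in> \<Union>?\<U>"
      proof (cases "u \<in> F")
        case True then show ?thesis using W(3) by blast
      next
        case False then obtain n where "u \<notin> B n" unfolding F_def by blast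
        then show ?thesis using u by blast
      qed
    qed
    have "\<exists>\<F>. finite \<F> \<and> \<F> \<subseteq> ?\<U> \<and> ?X \<subseteq> \<Union>\<F>"
      by (rule pr_compact[OF P, unfolded compact_space_alt, rule_format, of ?\<U>]) (intro conjI o1 o2)
    then obtain \<F> where Fi: "finite \<F>" "\<F> \<subseteq> ?\<U>" "?X \<subseteq> \<Union>\<F>"
      by blast
    have fin: "finite (\<F> - {T closure_of W})" using Fi(1) by blast
    have sub: "\<F> - {T closure_of W} \<subseteq> (\<lambda>n. ?X - B n) ` UNIV" using Fi(2) by blast
    obtain I where I: "finite I" "\<F> - {T closure_of W} = (\<lambda>n. ?X - B n) ` I"
      using finite_subset_image[OF fin sub] by blast
    obtain N where N: "\<forall>i\<in>I. i \<le> N" using I(1) finite_nat_set_iff_bounded_le by blast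
    have "B N \<subseteq> T closure_of W"
    proof
      fix u assume uB: "u \<in> B N"
      then have "u \<in> ?X" using BX by blast
      then obtain S where S: "S \<in> \<F>" "u \<in> S" using Fi(3) by blast
      show "u \<in> T closure_of W"
      proof (cases "S = T closure_of W")
        case True then show ?thesis using S by blast
      next
        case False
        then obtain i where i: "i \<in> I" "S = ?X - B i" using I(2) S by blast
        have "B N \<subseteq> B i" using Bdec N i(1) unfolding decseq_def by blast
        then show ?thesis using uB S i by blast
      qed
    qed
    then have "B (Suc N) \<subseteq> W" using Bstep[of N] W(1,2) unfolding way_below_def by blast
    moreover have "F \<subseteq> B (Suc N)" unfolding F_def by blast
    ultimately show ?thesis by blast
  qed
  have vF: "v \<in> F" using VF V(3) by blast
  obtain y where y: "y \<in> minimals le F" "le y v" using min_exists[OF P cF vF] by blast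
  have yF: "y \<in> F" using y by (simp add: minimals_def)
  have yX: "y \<in> ?X" using yF cF closedin_subset by blast
  have yA: "y \<in> A" using yF FA by blast
  have yC: "y \<notin> C"
  proof
    assume "y \<in> C"
    then have "v \<in> C" using C y(2) v(2) unfolding ClopUp_def upset_def by blast
    then show False using v(2) by blast
  qed
  define Dy where "Dy = {u \<in> ?X. le u y}"
  define Wy where "Wy = ?X - Dy"
  have oWy: "openin T Wy" unfolding Wy_def Dy_def using down_closed[OF P yX]
    by (simp add: closedin_def)
  have uWy: "upset T le Wy"
    unfolding upset_def Wy_def Dy_def
  proof (intro conjI ballI impI)
    show "?X - {u \<in> ?X. le u y} \<subseteq> ?X" by blast
    fix a b assume a: "a \<in> ?X - {u \<in> ?X. le u y}" and b: "b \<in> ?X" and ab: "le a b"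
    show "b \<in> ?X - {u \<in> ?X. le u y}"
    proof (rule ccontr)
      assume "b \<notin> ?X - {u \<in> ?X. le u y}"
      then have "le b y" using b by blast
      then have "le a y" using po_trans[OF P, of a b y] a b yX ab by blast
      then show False using a by blast
    qed
  qed
  have ync: "y \<notin> T closure_of Wy"
  proof
    assume yc: "y \<in> T closure_of Wy"
    have "F \<subseteq> T closure_of Wy"
    proof
      fix z assume z: "z \<in> F"
      have zX: "z \<in> ?X" using z cF closedin_subset by blast
      show "z \<in> T closure_of Wy"
      proof (cases "le z y")
        case True
        then have "z = y" using y(1) z unfolding minimals_def by blast
        then show ?thesis using yc by blast
      next
        case False
        then have "z \<in> Wy" using zX by (simp add: Wy_def Dy_def)
        then show ?thesis using closure_of_subset[of Wy T] unfolding Wy_def by blast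
      qed
    qed
    then have "F \<subseteq> Wy" using keyP oWy uWy by blast
    then have "y \<in> Wy" using yF by blast
    then show False using po_refl[OF P yX] by (simp add: Wy_def Dy_def)
  qed
  have K: "clopenin T (T closure_of Wy)" using L_cl[OF L oWy uWy] by (simp add: clopenin_def)
  have uK: "upset T le (T closure_of Wy)" using closure_upset[OF L uWy] .
  have "downclosure T le {y} = ?X - T closure_of Wy"
  proof
    show "downclosure T le {y} \<subseteq> ?X - T closure_of Wy"
    proof
      fix u assume "u \<in> downclosure T le {y}"
      then have u: "u \<in> ?X" "le u y" by (auto simp: downclosure_def)
      have "u \<notin> T closure_of Wy"
      proof
        assume "u \<in> T closure_of Wy"
        then have "y \<in> T closure_of Wy" using uK u yX unfolding upset_def by blast
        then show False using ync by blast
      qed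
      then show "u \<in> ?X - T closure_of Wy" using u by blast
    qed
  next
    show "?X - T closure_of Wy \<subseteq> downclosure T le {y}"
    proof
      fix u assume u: "u \<in> ?X - T closure_of Wy"
      then have "u \<notin> Wy" using closure_of_subset[of Wy T] unfolding Wy_def by blast
      then show "u \<in> downclosure T le {y}" using u by (auto simp: Wy_def Dy_def downclosure_def)
    qed
  qed
  then have "clopenin T (downclosure T le {y})" using clopenin_compl[OF K] by simp
  then have "y \<in> spatial_part T le" using yX by (simp add: spatial_part_def)
  then show ?thesis using yA yC by blast
qed



theorem lemma4p6:
  fixes T :: "'a topology" and le :: "'a \<Rightarrow> 'a \<Rightarrow> bool" and U :: "'a set"
  assumes "continuous_L_space T le"
    and "U \<in> ClopUp T le"
  defines "Y \<equiv> spatial_part T le"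
  shows "(ker T le U = core T le U \<longleftrightarrow> U \<subseteq> T closure_of (core T le U))
       \<and> (U \<subseteq> T closure_of (core T le U) \<longleftrightarrow>
            (\<forall>y \<in> U \<inter> Y. \<exists>V \<in> ClopSUp T le. y \<in> V \<and> V \<subseteq> U))
       \<and> ((\<forall>y \<in> U \<inter> Y. \<exists>V \<in> ClopSUp T le. y \<in> V \<and> V \<subseteq> U) \<longleftrightarrow>
            (\<forall>F. scott_upset T le F \<and> F \<subseteq> ker T le U \<longrightarrow>
                 (\<exists>V \<in> ClopSUp T le. F \<subseteq> V \<and> V \<subseteq> U)))"
proof -
  note cL = assms(1) and UC = assms(2)
  have L: "L_space T le" using cL by (rule cL_L)
  have P: "priestley_space T le" using L by (rule L_pr)
  let ?X = "topspace T"
  have denseU: "U \<subseteq> T closure_of (ker T le U)"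
    using cL UC unfolding continuous_L_space_def by blast
  have kerU: "ker T le U \<subseteq> U" using ker_sub[OF UC] .
  have UX: "U \<subseteq> ?X" using UC by (auto simp: ClopUp_def upset_def)
  have c12: "ker T le U = core T le U \<longleftrightarrow> U \<subseteq> T closure_of (core T le U)"
  proof
    assume "ker T le U = core T le U"
    then show "U \<subseteq> T closure_of (core T le U)" using denseU by simp
  next
    assume dc: "U \<subseteq> T closure_of (core T le U)"
    have "ker T le U \<subseteq> core T le U"
    proof
      fix x assume "x \<in> ker T le U"
      then obtain V where V: "V \<in> ClopUp T le" "way_below T le V U" "x \<in> V" by (auto simp: ker_def)
      have "V \<subseteq> core T le U"
        by (rule V(2)[unfolded way_below_def, rule_format]) (intro conjI core_open core_upset dc)
      then show "x \<in> core T le U" using V(3) by blast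
    qed
    then show "ker T le U = core T le U" using core_sub_ker[OF L UC] by blast
  qed
  have c23: "U \<subseteq> T closure_of (core T le U) \<longleftrightarrow>
            (\<forall>y \<in> U \<inter> Y. \<exists>V \<in> ClopSUp T le. y \<in> V \<and> V \<subseteq> U)"
  proof
    assume dc: "U \<subseteq> T closure_of (core T le U)"
    show "\<forall>y \<in> U \<inter> Y. \<exists>V \<in> ClopSUp T le. y \<in> V \<and> V \<subseteq> U"
    proof
      fix y assume y: "y \<in> U \<inter> Y"
      have yY: "y \<in> spatial_part T le" using y unfolding Y_def by blast
      have ycl: "y \<in> T closure_of (core T le U)" using y dc by blast
      have "y \<in> core T le U"
        using spatial_in_open_upset[OF P yY core_open core_upset ycl] .
      then show "\<exists>V \<in> ClopSUp T le. y \<in> V \<and> V \<subseteq> U" by (auto simp: core_def)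
    qed
  next
    assume h3: "\<forall>y \<in> U \<inter> Y. \<exists>V \<in> ClopSUp T le. y \<in> V \<and> V \<subseteq> U"
    let ?K = "T closure_of (core T le U)"
    have KC: "?K \<in> ClopUp T le"
      using L_cl[OF L core_open core_upset] closure_upset[OF L core_upset]
      by (simp add: ClopUp_def clopenin_def)
    show "U \<subseteq> ?K"
    proof (rule ccontr)
      assume "\<not> U \<subseteq> ?K"
      then obtain x0 where x0: "x0 \<in> U" "x0 \<notin> ?K" by blast
      have "\<exists>y\<in>spatial_part T le. y \<in> U \<and> y \<notin> ?K" using spatial[OF cL UC KC x0] .
      then obtain y where y: "y \<in> spatial_part T le" "y \<in> U" "y \<notin> ?K"
        by blast
      then obtain V where V: "V \<in> ClopSUp T le" "y \<in> V" "V \<subseteq> U" using h3 unfolding Y_def by blast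
      then have "y \<in> core T le U" unfolding core_def by blast
      moreover have "core T le U \<subseteq> ?K"
        by (rule closure_of_subset) (rule order_trans[OF core_sub UX])
      ultimately have "y \<in> ?K" by blast
      then show False using y by blast
    qed
  qed
  have c34: "(\<forall>y \<in> U \<inter> Y. \<exists>V \<in> ClopSUp T le. y \<in> V \<and> V \<subseteq> U) \<longleftrightarrow>
            (\<forall>F. scott_upset T le F \<and> F \<subseteq> ker T le U \<longrightarrow>
                 (\<exists>V \<in> ClopSUp T le. F \<subseteq> V \<and> V \<subseteq> U))"
  proof
    assume h3: "\<forall>y \<in> U \<inter> Y. \<exists>V \<in> ClopSUp T le. y \<in> V \<and> V \<subseteq> U"
    show "\<forall>F. scott_upset T le F \<and> F \<subseteq> ker T le U \<longrightarrow> (\<exists>V \<in> ClopSUp T le. F \<subseteq> V \<and> V \<subseteq> U)"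
    proof (intro allI impI)
      fix F assume F: "scott_upset T le F \<and> F \<subseteq> ker T le U"
      have cF: "closedin T F" using F by (simp add: scott_upset_def)
      define \<V> where "\<V> = {V \<in> ClopSUp T le. V \<subseteq> U}"
      have cov: "F \<subseteq> \<Union>\<V>"
      proof
        fix x assume x: "x \<in> F"
        obtain m where m: "m \<in> minimals le F" "le m x" using min_exists[OF P cF x] by blast
        have mY: "m \<in> Y" using m F unfolding scott_upset_def Y_def by blast
        have mU: "m \<in> U" using m F kerU unfolding minimals_def by blast
        obtain V where V: "V \<in> ClopSUp T le" "m \<in> V" "V \<subseteq> U" using h3 mY mU by blast
        have xX: "x \<in> ?X" using x cF closedin_subset by blast
        have "x \<in> V" using V m(2) xX unfolding ClopSUp_def ClopUp_def upset_def by blast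
        then show "x \<in> \<Union>\<V>" using V unfolding \<V>_def by blast
      qed
      have comp: "compactin T F" using closedin_compact_space[OF pr_compact[OF P] cF] .
      have opn: "\<forall>V\<in>\<V>. openin T V" by (auto simp: \<V>_def ClopSUp_def ClopUp_def clopenin_def)
      have "\<exists>\<F>. finite \<F> \<and> \<F> \<subseteq> \<V> \<and> F \<subseteq> \<Union>\<F>"
        using comp unfolding compactin_def using opn cov by blast
      then obtain \<F> where Fi: "finite \<F>" "\<F> \<subseteq> \<V>" "F \<subseteq> \<Union>\<F>" by blast
      have "\<Union>\<F> \<in> ClopSUp T le" using Fi by (intro Union_ClopSUp) (auto simp: \<V>_def)
      moreover have "\<Union>\<F> \<subseteq> U" using Fi(2) by (auto simp: \<V>_def)
      ultimately show "\<exists>V \<in> ClopSUp T le. F \<subseteq> V \<and> V \<subseteq> U" using Fi(3) by blast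
    qed
  next
    assume h4: "\<forall>F. scott_upset T le F \<and> F \<subseteq> ker T le U \<longrightarrow> (\<exists>V \<in> ClopSUp T le. F \<subseteq> V \<and> V \<subseteq> U)"
    show "\<forall>y \<in> U \<inter> Y. \<exists>V \<in> ClopSUp T le. y \<in> V \<and> V \<subseteq> U"
    proof
      fix y assume y: "y \<in> U \<inter> Y"
      have yX: "y \<in> ?X" using y UX by blast
      define F where "F = {u \<in> ?X. le y u}"
      have yF: "y \<in> F" using po_refl[OF P yX] yX by (simp add: F_def)
      have cF: "closedin T F" unfolding F_def using up_closed[OF P yX] .
      have uF: "upset T le F"
        unfolding upset_def F_def
      proof (intro conjI ballI impI)
        show "{u \<in> ?X. le y u} \<subseteq> ?X" by blast
        fix a b assume a: "a \<in> {u \<in> ?X. le y u}" and b: "b \<in> ?X" and ab: "le a b"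
        have "le y b" using po_trans[OF P, of y a b] a b yX ab by blast
        then show "b \<in> {u \<in> ?X. le y u}" using b by blast
      qed
      have mF: "minimals le F \<subseteq> Y"
      proof
        fix m assume m: "m \<in> minimals le F"
        then have "m \<in> F" "\<forall>z\<in>F. le z m \<longrightarrow> z = m" by (auto simp: minimals_def)
        then have "m = y" using yF by (auto simp: F_def)
        then show "m \<in> Y" using y by blast
      qed
      have sF: "scott_upset T le F" using cF uF mF unfolding scott_upset_def Y_def by blast
      have yY: "y \<in> spatial_part T le" using y unfolding Y_def by blast
      have ycl: "y \<in> T closure_of (ker T le U)" using y denseU by blast
      have yk: "y \<in> ker T le U"
        using spatial_in_open_upset[OF P yY ker_open ker_upset ycl] .
      have "F \<subseteq> ker T le U"
      proof
        fix u assume "u \<in> F"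
        then have "u \<in> ?X" "le y u" by (auto simp: F_def)
        then show "u \<in> ker T le U" using yk ker_upset[of T le U] unfolding upset_def by blast
      qed
      then obtain V where "V \<in> ClopSUp T le" "F \<subseteq> V" "V \<subseteq> U" using h4 sF by blast
      then show "\<exists>V \<in> ClopSUp T le. y \<in> V \<and> V \<subseteq> U" using yF by blast
    qed
  qed
  show ?thesis using c12 c23 c34 by blast
qed


end
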